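(* Let $M,N\ge1$ be integers and let $\sigma$ be a nonempty set of (distinct) functions $\mathbb{Z}_M\to\mathbb{Z}_N$ that is totally indistinguishable. Then $\sigma$ has cardinality at least $4$.
   Context: A set $\sigma$ of functions $\mathbb{Z}_M\to\mathbb{Z}_N$ is totally indistinguishable if for every $x\in\mathbb{Z}_M$ and every $f\in\sigma$ there exists $f'\in\sigma$ with $f'\neq f$ and $f'(x)=f(x)$. *)

theory Defs
  imports Main "HOL-Library.FuncSet"
begin

text \<open>Z_M is modelled as the carrier {0..<M} of natural numbers; a function Z_M to Z_N
  is an extensional function in PiE {0..<M} (%_. {0..<N}).\<close>

definition totally_indistinguishable :: "nat \<Rightarrow> (nat \<Rightarrow> nat) set \<Rightarrow> bool" where
  "totally_indistinguishable M \<sigma> \<longleftrightarrow>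
     (\<forall>x\<in>{0..<M}. \<forall>f\<in>\<sigma>. \<exists>f'\<in>\<sigma>. f' \<noteq> f \<and> f' x = f x)"

end

theory Submission
  imports Defs
begin

theorem lemma2:
  fixes M N :: nat and \<sigma> :: "(nat \<Rightarrow> nat) set"
  assumes "M \<ge> 1" and "N \<ge> 1"
    and "\<sigma> \<subseteq> {0..<M} \<rightarrow>\<^sub>E {0..<N}"
    and "\<sigma> \<noteq> {}"
    and "totally_indistinguishable M \<sigma>"
  shows "card \<sigma> \<ge> 4"
proof -
  have fin: "finite \<sigma>"
    using assms(3) by (rule finite_subset) (simp add: finite_PiE)
  obtain f where f: "f \<in> \<sigma>" using assms(4) by blast
  have "(0::nat) \<in> {0..<M}" using assms(1) by simp
  then obtain g where g: "g \<in> \<sigma>" "g \<noteq> f"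
    using assms(5) f unfolding totally_indistinguishable_def by blast
  have "\<exists>x\<in>{0..<M}. f x \<noteq> g x"
  proof (rule ccontr)
    assume "\<not> ?thesis"
    hence "\<And>x. x \<in> {0..<M} \<Longrightarrow> f x = g x" by blast
    moreover have "f \<in> {0..<M} \<rightarrow>\<^sub>E {0..<N}" "g \<in> {0..<M} \<rightarrow>\<^sub>E {0..<N}"
      using f g assms(3) by auto
    ultimately have "f = g" using PiE_ext by metis
    thus False using g by simp
  qed
  then obtain x where x: "x \<in> {0..<M}" "f x \<noteq> g x" by blast
  obtain h where h: "h \<in> \<sigma>" "h \<noteq> f" "h x = f x"
    using assms(5) f x(1) unfolding totally_indistinguishable_def by blast
  obtain k where k: "k \<in> \<sigma>" "k \<noteq> g" "k x = g x"
    using assms(5) g x(1) unfolding totally_indistinguishable_def by blast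
  have sub: "{f, g, h, k} \<subseteq> \<sigma>" using f g h k by auto
  have d: "f \<noteq> g" "f \<noteq> h" "f \<noteq> k" "g \<noteq> h" "g \<noteq> k" "h \<noteq> k"
    using g h k x by metis+
  have "card {f, g, h, k} = 4"
    using d by simp
  thus ?thesis using card_mono[OF fin sub] by simp
qed

end
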